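(* Let $A\in\mathbb{R}^{n\times n}$ be symmetric of rank $r\ge 1$, written as $A=Q\Lambda Q^\top=\sum_{i=1}^r\lambda_i\vec{q}_i\vec{q}_i^\top$, where $Q=[\vec{q}_1\ \cdots\ \vec{q}_r]\in\mathbb{R}^{n\times r}$ has orthonormal columns that are eigenvectors of $A$ for its nonzero eigenvalues and $\Lambda=\mathrm{Diag}(\lambda_1,\dots,\lambda_r)$ is the diagonal matrix of these nonzero eigenvalues. Let $\bar{Q}=[\bar{\vec{q}}_{r+1}\ \cdots\ \bar{\vec{q}}_n]$ have orthonormal columns spanning the null space of $A$, and let $\vec{x}_0=Q\nu+\bar{Q}\mu$ with $\nu\in\mathbb{R}^r$, $\nu\neq 0$, $\mu\in\mathbb{R}^{n-r}$. Let $\vec{x}_{t+1}=A\vec{x}_t$, $X_j=[\vec{x}_0\ \cdots\ \vec{x}_j]$, $Y_j=[\vec{x}_1\ \cdots\ \vec{x}_{j+1}]$, $\hat{A}_j=Y_jX_j^{\dagger}$. Let $1\le k<n$, let $U_{k-1}$ be the matrix of left singular vectors of $X_{k-1}$ corresponding to its nonzero singular values, and $S_k=I-U_{k-1}U_{k-1}^\top$. Assume $\|S_kQ\Lambda^k\nu\|\neq 0$. Then $$A-\hat{A}_k=A\left(I-\frac{S_kQ\Lambda^k\nu\nu^\top\Lambda^kQ^\top}{\|S_kQ\Lambda^k\nu\|^2}\right)S_k .$$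
   Context: $M^{\dagger}$ is the Moore–Penrose pseudo-inverse; $\|\cdot\|$ on vectors is the Euclidean norm. $S_k$ is the orthogonal projection onto the orthogonal complement of the range of $X_{k-1}$. *)

theory Defs
  imports Complex_Main "Jordan_Normal_Form.Matrix" "Jordan_Normal_Form.DL_Rank"
begin

definition vnorm :: "real vec \<Rightarrow> real" where
  "vnorm v = sqrt (v \<bullet> v)"

definition pinv :: "real mat \<Rightarrow> real mat" where
  "pinv M = (THE X. X \<in> carrier_mat (dim_col M) (dim_row M) \<and>
      M * X * M = M \<and> X * M * X = X \<and>
      transpose_mat (M * X) = M * X \<and> transpose_mat (X * M) = X * M)"

definition col_range :: "real mat \<Rightarrow> real vec set" where
  "col_range M = {M *\<^sub>v w | w. w \<in> carrier_vec (dim_col M)}"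

definition orth_compl :: "nat \<Rightarrow> real vec set \<Rightarrow> real vec set" where
  "orth_compl n V = {v \<in> carrier_vec n. \<forall>u\<in>V. v \<bullet> u = 0}"

definition orth_proj :: "nat \<Rightarrow> real vec set \<Rightarrow> real mat" where
  "orth_proj n V = (THE P. P \<in> carrier_mat n n \<and>
      (\<forall>v\<in>carrier_vec n. P *\<^sub>v v \<in> V \<and> (\<forall>u\<in>V. (v - P *\<^sub>v v) \<bullet> u = 0)))"

primrec iter :: "real mat \<Rightarrow> real vec \<Rightarrow> nat \<Rightarrow> real vec" where
  "iter A x0 0 = x0"
| "iter A x0 (Suc t) = A *\<^sub>v iter A x0 t"

definition Xmat :: "nat \<Rightarrow> real mat \<Rightarrow> real vec \<Rightarrow> nat \<Rightarrow> real mat" where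
  "Xmat n A x0 j = mat_of_cols n (map (iter A x0) [0..<Suc j])"

definition Ymat :: "nat \<Rightarrow> real mat \<Rightarrow> real vec \<Rightarrow> nat \<Rightarrow> real mat" where
  "Ymat n A x0 j = mat_of_cols n (map (iter A x0) [1..<Suc (Suc j)])"

definition Ahat :: "nat \<Rightarrow> real mat \<Rightarrow> real vec \<Rightarrow> nat \<Rightarrow> real mat" where
  "Ahat n A x0 j = Ymat n A x0 j * pinv (Xmat n A x0 j)"

definition Smat :: "nat \<Rightarrow> real mat \<Rightarrow> real vec \<Rightarrow> nat \<Rightarrow> real mat" where
  "Smat n A x0 k = orth_proj n (orth_compl n (col_range (Xmat n A x0 (k - 1))))"

end

theory Submission
  imports Defs
begin


lemma mat_eq_vec:
  fixes A B :: "'a::semiring_1 mat"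
  assumes A: "A \<in> carrier_mat n m" and B: "B \<in> carrier_mat n m"
    and h: "\<And>v. v \<in> carrier_vec m \<Longrightarrow> A *\<^sub>v v = B *\<^sub>v v"
  shows "A = B"
proof (rule eq_matI)
  fix i j assume i: "i < dim_row B" and j: "j < dim_col B"
  have "(A *\<^sub>v unit_vec m j) $ i = (B *\<^sub>v unit_vec m j) $ i" using h by simp
  then show "A $$ (i,j) = B $$ (i,j)" using A B i j by simp
qed (use A B in auto)

lemma dot_self_zero:
  fixes v :: "real vec"
  assumes "v \<in> carrier_vec n" "v \<bullet> v = 0"
  shows "v = 0\<^sub>v n"
proof -
  have "(\<Sum>i\<in>{0..<n}. v $ i * v $ i) = 0" using assms unfolding scalar_prod_def by simp
  then have "\<forall>i\<in>{0..<n}. v $ i * v $ i = 0"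
    by (subst sum_nonneg_eq_0_iff[symmetric]) auto
  then show ?thesis using assms by (intro eq_vecI) auto
qed

lemma sym_iff_dot:
  fixes P :: "real mat"
  assumes P: "P \<in> carrier_mat n n"
  shows "transpose_mat P = P \<longleftrightarrow> (\<forall>x\<in>carrier_vec n. \<forall>y\<in>carrier_vec n. (P *\<^sub>v x) \<bullet> y = x \<bullet> (P *\<^sub>v y))"
proof
  assume t: "transpose_mat P = P"
  show "\<forall>x\<in>carrier_vec n. \<forall>y\<in>carrier_vec n. (P *\<^sub>v x) \<bullet> y = x \<bullet> (P *\<^sub>v y)"
  proof (intro ballI)
    fix x y :: "real vec" assume x: "x \<in> carrier_vec n" and y: "y \<in> carrier_vec n"
    have "(P *\<^sub>v x) \<bullet> y = y \<bullet> (P *\<^sub>v x)" using x y P by (intro comm_scalar_prod[of _ n]) auto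
    also have "\<dots> = (transpose_mat P *\<^sub>v y) \<bullet> x" using transpose_vec_mult_scalar[OF P x y] by simp
    also have "\<dots> = x \<bullet> (P *\<^sub>v y)" using t x y P by (simp add: comm_scalar_prod[of _ n])
    finally show "(P *\<^sub>v x) \<bullet> y = x \<bullet> (P *\<^sub>v y)" .
  qed
next
  assume d: "\<forall>x\<in>carrier_vec n. \<forall>y\<in>carrier_vec n. (P *\<^sub>v x) \<bullet> y = x \<bullet> (P *\<^sub>v y)"
  show "transpose_mat P = P"
  proof (rule eq_matI)
    fix i j assume i: "i < dim_row P" and j: "j < dim_col P"
    have "(P *\<^sub>v unit_vec n i) \<bullet> unit_vec n j = unit_vec n i \<bullet> (P *\<^sub>v unit_vec n j)"
      using d by simp
    then show "transpose_mat P $$ (i, j) = P $$ (i, j)" using i j P by simp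
  qed (use P in auto)
qed


lemma vec_minus_zero:
  fixes a b :: "'a::ab_group_add vec"
  assumes a: "a \<in> carrier_vec n" and b: "b \<in> carrier_vec n" and e: "a - b = 0\<^sub>v n"
  shows "a = b"
proof (rule eq_vecI)
  fix i assume i: "i < dim_vec b"
  have "(a - b) $ i = 0" using e i b by simp
  then show "a $ i = b $ i" using i a b by simp
qed (use a b in simp)

definition isPl :: "nat \<Rightarrow> real vec list \<Rightarrow> real mat \<Rightarrow> bool" where
  "isPl n vs P \<longleftrightarrow> P \<in> carrier_mat n n \<and>
     (\<forall>x\<in>carrier_vec n. \<forall>y\<in>carrier_vec n. (P *\<^sub>v x) \<bullet> y = x \<bullet> (P *\<^sub>v y)) \<and>
     (\<forall>v\<in>set vs. P *\<^sub>v v = v) \<and>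
     (\<forall>u\<in>carrier_vec n. (\<forall>v\<in>set vs. v \<bullet> u = 0) \<longrightarrow> P *\<^sub>v u = 0\<^sub>v n)"

lemma isPl_carrier: "isPl n vs P \<Longrightarrow> P \<in> carrier_mat n n"
  unfolding isPl_def by blast
lemma isPl_sym: "isPl n vs P \<Longrightarrow> x \<in> carrier_vec n \<Longrightarrow> y \<in> carrier_vec n \<Longrightarrow> (P *\<^sub>v x) \<bullet> y = x \<bullet> (P *\<^sub>v y)"
  unfolding isPl_def by blast
lemma isPl_fix: "isPl n vs P \<Longrightarrow> v \<in> set vs \<Longrightarrow> P *\<^sub>v v = v"
  unfolding isPl_def by blast
lemma isPl_ker: "isPl n vs P \<Longrightarrow> u \<in> carrier_vec n \<Longrightarrow> (\<And>v. v \<in> set vs \<Longrightarrow> v \<bullet> u = 0) \<Longrightarrow> P *\<^sub>v u = 0\<^sub>v n"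
  unfolding isPl_def by blast

lemma isPl_absorb:
  assumes P1: "isPl n vs P1" and P2: "isPl n vs P2" and vs: "set vs \<subseteq> carrier_vec n" and x: "x \<in> carrier_vec n"
  shows "P1 *\<^sub>v (P2 *\<^sub>v x) = P1 *\<^sub>v x"
proof -
  note c1 = isPl_carrier[OF P1] and c2 = isPl_carrier[OF P2]
  have Px: "P2 *\<^sub>v x \<in> carrier_vec n" using c2 x by auto
  have z: "v \<bullet> (x - P2 *\<^sub>v x) = 0" if v: "v \<in> set vs" for v
  proof -
    have vc: "v \<in> carrier_vec n" using vs v by auto
    have "v \<bullet> (P2 *\<^sub>v x) = (P2 *\<^sub>v v) \<bullet> x" using isPl_sym[OF P2 vc x] by simp
    also have "\<dots> = v \<bullet> x" using isPl_fix[OF P2 v] by simp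
    finally show ?thesis using scalar_prod_minus_distrib[OF vc x Px] by simp
  qed
  have xm: "x - P2 *\<^sub>v x \<in> carrier_vec n" using x Px by simp
  have "P1 *\<^sub>v (x - P2 *\<^sub>v x) = 0\<^sub>v n" by (rule isPl_ker[OF P1 xm z])
  then have "P1 *\<^sub>v x - P1 *\<^sub>v (P2 *\<^sub>v x) = 0\<^sub>v n"
    using mult_minus_distrib_mat_vec[OF c1 x Px] by simp
  then show ?thesis using vec_minus_zero[of "P1 *\<^sub>v x" n "P1 *\<^sub>v (P2 *\<^sub>v x)"] c1 x Px by simp
qed

lemma isPl_idem:
  assumes P: "isPl n vs P" and vs: "set vs \<subseteq> carrier_vec n" and x: "x \<in> carrier_vec n"
  shows "P *\<^sub>v (P *\<^sub>v x) = P *\<^sub>v x"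
  by (rule isPl_absorb[OF P P vs x])

lemma isPl_uniq:
  assumes P1: "isPl n vs P1" and P2: "isPl n vs P2" and vs: "set vs \<subseteq> carrier_vec n"
  shows "P1 = P2"
proof -
  note c1 = isPl_carrier[OF P1] and c2 = isPl_carrier[OF P2]
  show ?thesis
  proof (rule mat_eq_vec[OF c1 c2])
    fix x :: "real vec" assume x: "x \<in> carrier_vec n"
    have P1x: "P1 *\<^sub>v x \<in> carrier_vec n" and P2x: "P2 *\<^sub>v x \<in> carrier_vec n" using c1 c2 x by auto
    have d: "(P1 *\<^sub>v x) \<bullet> y = (P2 *\<^sub>v x) \<bullet> y" if y: "y \<in> carrier_vec n" for y
    proof -
      have P1y: "P1 *\<^sub>v y \<in> carrier_vec n" using c1 y by auto
      have "(P1 *\<^sub>v x) \<bullet> y = (P1 *\<^sub>v (P2 *\<^sub>v x)) \<bullet> y" using isPl_absorb[OF P1 P2 vs x] by simp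
      also have "\<dots> = (P2 *\<^sub>v x) \<bullet> (P1 *\<^sub>v y)" using isPl_sym[OF P1 P2x y] .
      also have "\<dots> = x \<bullet> (P2 *\<^sub>v (P1 *\<^sub>v y))" using isPl_sym[OF P2 x P1y] .
      also have "\<dots> = x \<bullet> (P2 *\<^sub>v y)" using isPl_absorb[OF P2 P1 vs y] by simp
      also have "\<dots> = (P2 *\<^sub>v x) \<bullet> y" using isPl_sym[OF P2 x y] by simp
      finally show ?thesis .
    qed
    have dc: "P1 *\<^sub>v x - P2 *\<^sub>v x \<in> carrier_vec n" using P1x P2x by simp
    have "(P1 *\<^sub>v x - P2 *\<^sub>v x) \<bullet> (P1 *\<^sub>v x - P2 *\<^sub>v x) = 0"
      using d[OF dc] minus_scalar_prod_distrib[OF P1x P2x dc] by simp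
    then have "P1 *\<^sub>v x - P2 *\<^sub>v x = 0\<^sub>v n" using dot_self_zero[OF dc] by simp
    then show "P1 *\<^sub>v x = P2 *\<^sub>v x" using vec_minus_zero[OF P1x P2x] by simp
  qed
qed



lemma outer_mult:
  fixes a b x :: "real vec"
  assumes a: "a \<in> carrier_vec n" and b: "b \<in> carrier_vec n" and x: "x \<in> carrier_vec n"
  shows "mat n n (\<lambda>(i,j). a $ i * b $ j) *\<^sub>v x = (b \<bullet> x) \<cdot>\<^sub>v a"
  proof (rule eq_vecI)
  fix i assume "i < dim_vec ((b \<bullet> x) \<cdot>\<^sub>v a)"
  then have i: "i < n" using a by simp
  then show "(mat n n (\<lambda>(i,j). a $ i * b $ j) *\<^sub>v x) $ i = ((b \<bullet> x) \<cdot>\<^sub>v a) $ i"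
    using i a b x by (simp add: scalar_prod_def sum_distrib_left ac_simps)
qed (use a in simp)

lemma mat_of_cols_Cons_mult:
  fixes v y :: "real vec"
  assumes v: "v \<in> carrier_vec n" and vs: "set vs \<subseteq> carrier_vec n" and y: "y \<in> carrier_vec (Suc (length vs))"
  shows "mat_of_cols n (v # vs) *\<^sub>v y = y $ 0 \<cdot>\<^sub>v v + mat_of_cols n vs *\<^sub>v vec (length vs) (\<lambda>i. y $ Suc i)"
proof (rule eq_vecI)
  fix i assume "i < dim_vec (y $ 0 \<cdot>\<^sub>v v + mat_of_cols n vs *\<^sub>v vec (length vs) (\<lambda>i. y $ Suc i))"
  then have i: "i < n" by simp
  then show "(mat_of_cols n (v # vs) *\<^sub>v y) $ i = (y $ 0 \<cdot>\<^sub>v v + mat_of_cols n vs *\<^sub>v vec (length vs) (\<lambda>i. y $ Suc i)) $ i"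
  proof -
    have "(mat_of_cols n (v # vs) *\<^sub>v y) $ i = (\<Sum>j = 0..<Suc (length vs). (v # vs) ! j $ i * y $ j)"
      using i y by (simp add: mat_of_cols_def scalar_prod_def del: sum.atLeast0_lessThan_Suc atLeast0_lessThan_Suc)
    also have "\<dots> = v $ i * y $ 0 + (\<Sum>j = 0..<length vs. vs ! j $ i * y $ Suc j)"
      by (subst sum.atLeast0_lessThan_Suc_shift) simp
    finally show ?thesis using i v y by (simp add: mat_of_cols_def scalar_prod_def ac_simps)
  qed
qed (use v in simp)

lemma mat_of_cols_Nil_mult: "y \<in> carrier_vec 0 \<Longrightarrow> mat_of_cols n [] *\<^sub>v y = 0\<^sub>v n"
  by (rule eq_vecI) (auto simp: mat_of_cols_def scalar_prod_def)



lemma isPl_exists: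
  "set vs \<subseteq> carrier_vec n \<Longrightarrow> \<exists>P. isPl n vs P \<and>
     (\<forall>x\<in>carrier_vec n. \<exists>y\<in>carrier_vec (length vs). P *\<^sub>v x = mat_of_cols n vs *\<^sub>v y)"
proof (induction vs)
  case Nil
  have z: "x \<in> carrier_vec n \<Longrightarrow> 0\<^sub>m n n *\<^sub>v x = 0\<^sub>v n" for x :: "real vec"
    by (rule eq_vecI) (auto simp: scalar_prod_def)
  have "isPl n [] (0\<^sub>m n n)" unfolding isPl_def by (simp add: z)
  moreover have "\<forall>x\<in>carrier_vec n. \<exists>y\<in>carrier_vec 0. 0\<^sub>m n n *\<^sub>v x = mat_of_cols n [] *\<^sub>v y"
    by (intro ballI bexI[of _ "0\<^sub>v 0"]) (auto simp: z mat_of_cols_Nil_mult)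
  ultimately show ?case by auto
next
  case (Cons v vs)
  then have v: "v \<in> carrier_vec n" and vs: "set vs \<subseteq> carrier_vec n" by auto
  from Cons.IH[OF vs] obtain P where P: "isPl n vs P"
    and R: "\<forall>x\<in>carrier_vec n. \<exists>y\<in>carrier_vec (length vs). P *\<^sub>v x = mat_of_cols n vs *\<^sub>v y" by blast
  note Pc = isPl_carrier[OF P]
  let ?M = "mat_of_cols n vs"
  let ?l = "length vs"
  define w where "w = v - P *\<^sub>v v"
  have Pv: "P *\<^sub>v v \<in> carrier_vec n" using Pc v by simp
  have wc: "w \<in> carrier_vec n" unfolding w_def using v Pv by simp
  have wx: "w \<bullet> x = v \<bullet> x - v \<bullet> (P *\<^sub>v x)" if x: "x \<in> carrier_vec n" for x
    unfolding w_def using minus_scalar_prod_distrib[OF v Pv x] isPl_sym[OF P v x] by simp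
  have wu: "w \<bullet> u = 0" if u: "u \<in> set vs" for u
  proof -
    have uc: "u \<in> carrier_vec n" using u vs by auto
    show ?thesis using wx[OF uc] isPl_fix[OF P u] by simp
  qed
  have wP: "w \<bullet> (P *\<^sub>v v) = 0"
    using wx[OF Pv] isPl_idem[OF P vs v] by simp
  have ww: "w \<bullet> w = w \<bullet> v"
    using scalar_prod_minus_distrib[OF wc v Pv] wP unfolding w_def[symmetric] by (simp add: w_def)
  obtain y0 where y0: "y0 \<in> carrier_vec ?l" and Py0: "P *\<^sub>v v = ?M *\<^sub>v y0" using R v by blast
  have Mc: "?M \<in> carrier_mat n ?l" by simp
  show ?case
  proof (cases "w = 0\<^sub>v n")
    case True
    then have Pvv: "P *\<^sub>v v = v" unfolding w_def using vec_minus_zero[OF v Pv] by simp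
    have "isPl n (v # vs) P"
      unfolding isPl_def using Pc isPl_sym[OF P] isPl_fix[OF P] isPl_ker[OF P] Pvv by auto
    moreover have "\<forall>x\<in>carrier_vec n. \<exists>y\<in>carrier_vec (length (v # vs)). P *\<^sub>v x = mat_of_cols n (v # vs) *\<^sub>v y"
    proof
      fix x :: "real vec" assume x: "x \<in> carrier_vec n"
      obtain y where y: "y \<in> carrier_vec ?l" and Py: "P *\<^sub>v x = ?M *\<^sub>v y" using R x by blast
      define y' where "y' = vec (Suc ?l) (\<lambda>i. if i = 0 then 0 else y $ (i - 1))"
      have y'c: "y' \<in> carrier_vec (Suc ?l)" unfolding y'_def by simp
      have yy: "vec ?l (\<lambda>i. y' $ Suc i) = y" unfolding y'_def using y by (intro eq_vecI) auto
      have "mat_of_cols n (v # vs) *\<^sub>v y' = ?M *\<^sub>v y"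
        unfolding mat_of_cols_Cons_mult[OF v vs y'c] yy
        using v y by (intro eq_vecI) (auto simp: y'_def)
      then show "\<exists>y\<in>carrier_vec (length (v # vs)). P *\<^sub>v x = mat_of_cols n (v # vs) *\<^sub>v y"
        using y'c Py by (intro bexI[of _ y']) auto
    qed
    ultimately show ?thesis by blast
  next
    case False
    define c where "c = w \<bullet> w"
    have c0: "c \<noteq> 0" unfolding c_def using dot_self_zero[OF wc] False by auto
    define P' where "P' = mat n n (\<lambda>(i,j). P $$ (i,j) + w $ i * w $ j / c)"
    have P'c: "P' \<in> carrier_mat n n" unfolding P'_def by simp
    have P'x: "P' *\<^sub>v x = P *\<^sub>v x + ((w \<bullet> x) / c) \<cdot>\<^sub>v w" if x: "x \<in> carrier_vec n" for x
    proof (rule eq_vecI)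
      fix i assume "i < dim_vec (P *\<^sub>v x + ((w \<bullet> x) / c) \<cdot>\<^sub>v w)"
      then have i: "i < n" using Pc wc by simp
      have "(\<Sum>j = 0..<n. (P $$ (i, j) + w $ i * w $ j / c) * x $ j)
          = (\<Sum>j = 0..<n. P $$ (i, j) * x $ j) + (\<Sum>j = 0..<n. w $ j * x $ j) / c * w $ i"
      proof -
        have h: "\<And>j. (P $$ (i, j) + w $ i * w $ j / c) * x $ j = P $$ (i, j) * x $ j + w $ i * (w $ j * x $ j / c)"
          by (simp add: algebra_simps)
        show ?thesis unfolding h sum.distrib sum_distrib_left[symmetric] sum_divide_distrib[symmetric]
          by simp
      qed
      then show "(P' *\<^sub>v x) $ i = (P *\<^sub>v x + ((w \<bullet> x) / c) \<cdot>\<^sub>v w) $ i"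
        using i x Pc wc unfolding P'_def by (simp add: scalar_prod_def)
    qed (use Pc P'c wc in simp)
    have "isPl n (v # vs) P'"
      unfolding isPl_def
    proof (intro conjI ballI impI)
      show "P' \<in> carrier_mat n n" by (rule P'c)
    next
      fix x y :: "real vec" assume x: "x \<in> carrier_vec n" and y: "y \<in> carrier_vec n"
      have Px: "P *\<^sub>v x \<in> carrier_vec n" and Py: "P *\<^sub>v y \<in> carrier_vec n" using Pc x y by auto
      have "(P' *\<^sub>v x) \<bullet> y = (P *\<^sub>v x) \<bullet> y + (w \<bullet> x) / c * (w \<bullet> y)"
        unfolding P'x[OF x] using Px wc y by (simp add: add_scalar_prod_distrib[of _ n])
      also have "\<dots> = x \<bullet> (P *\<^sub>v y) + (w \<bullet> y) / c * (x \<bullet> w)"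
        using isPl_sym[OF P x y] comm_scalar_prod[OF wc x] by simp
      also have "\<dots> = x \<bullet> (P' *\<^sub>v y)"
        unfolding P'x[OF y] using Py wc x by (simp add: scalar_prod_add_distrib[of _ n])
      finally show "(P' *\<^sub>v x) \<bullet> y = x \<bullet> (P' *\<^sub>v y)" .
    next
      fix u assume u: "u \<in> set (v # vs)"
      show "P' *\<^sub>v u = u"
      proof (cases "u = v")
        case True
        have "P' *\<^sub>v v = P *\<^sub>v v + w" unfolding P'x[OF v] using ww c0 unfolding c_def by simp
        also have "\<dots> = v" unfolding w_def using v Pv Pc by (intro eq_vecI) auto
        finally show ?thesis using True by simp
      next
        case False
        then have u': "u \<in> set vs" using u by simp
        then have uc: "u \<in> carrier_vec n" using vs by auto
        show ?thesis unfolding P'x[OF uc] wu[OF u'] isPl_fix[OF P u'] using uc wc by (intro eq_vecI) auto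
      qed
    next
      fix u :: "real vec" assume uc: "u \<in> carrier_vec n" and orth: "\<forall>v'\<in>set (v # vs). v' \<bullet> u = 0"
      have Pu: "P *\<^sub>v u = 0\<^sub>v n" using isPl_ker[OF P uc] orth by auto
      have "w \<bullet> u = 0" using wx[OF uc] Pu orth v by simp
      then show "P' *\<^sub>v u = 0\<^sub>v n" unfolding P'x[OF uc] Pu using wc by (intro eq_vecI) auto
    qed
    moreover have "\<forall>x\<in>carrier_vec n. \<exists>y\<in>carrier_vec (length (v # vs)). P' *\<^sub>v x = mat_of_cols n (v # vs) *\<^sub>v y"
    proof
      fix x :: "real vec" assume x: "x \<in> carrier_vec n"
      obtain y where y: "y \<in> carrier_vec ?l" and Py: "P *\<^sub>v x = ?M *\<^sub>v y" using R x by blast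
      define a where "a = (w \<bullet> x) / c"
      define y' where "y' = vec (Suc ?l) (\<lambda>i. if i = 0 then a else y $ (i - 1) - a * y0 $ (i - 1))"
      have y'c: "y' \<in> carrier_vec (Suc ?l)" unfolding y'_def by simp
      have yy: "vec ?l (\<lambda>i. y' $ Suc i) = y - a \<cdot>\<^sub>v y0" unfolding y'_def using y y0 by (intro eq_vecI) auto
      have My: "?M *\<^sub>v (y - a \<cdot>\<^sub>v y0) = ?M *\<^sub>v y - a \<cdot>\<^sub>v (?M *\<^sub>v y0)"
        using mult_minus_distrib_mat_vec[OF Mc y, of "a \<cdot>\<^sub>v y0"] mult_mat_vec[OF Mc y0] y0 by simp
      have "mat_of_cols n (v # vs) *\<^sub>v y' = a \<cdot>\<^sub>v v + (?M *\<^sub>v y - a \<cdot>\<^sub>v (?M *\<^sub>v y0))"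
        unfolding mat_of_cols_Cons_mult[OF v vs y'c] yy My by (simp add: y'_def)
      also have "\<dots> = P' *\<^sub>v x"
      proof -
        have wv: "w = v - ?M *\<^sub>v y0" unfolding w_def Py0 ..
        show ?thesis unfolding P'x[OF x] a_def[symmetric] Py unfolding wv using v Pv Mc y y0
          by (intro eq_vecI) (auto simp: algebra_simps)
      qed
      finally show "\<exists>y\<in>carrier_vec (length (v # vs)). P' *\<^sub>v x = mat_of_cols n (v # vs) *\<^sub>v y"
        using y'c by (intro bexI[of _ y']) auto
    qed
    ultimately show ?thesis by blast
  qed
qed



lemma set_cols_iff: "v \<in> set (cols M) \<longleftrightarrow> (\<exists>j<dim_col M. v = col M j)"
  by (auto simp: cols_def)

lemma set_rows_iff: "v \<in> set (rows M) \<longleftrightarrow> (\<exists>i<dim_row M. v = row M i)"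
  by (auto simp: rows_def)

lemma cols_carrier: "M \<in> carrier_mat n m \<Longrightarrow> set (cols M) \<subseteq> carrier_vec n"
  by (auto simp: set_cols_iff)

lemma rows_carrier: "M \<in> carrier_mat n m \<Longrightarrow> set (rows M) \<subseteq> carrier_vec m"
  by (auto simp: set_rows_iff)

lemma isPl_fix_mat:
  assumes P: "isPl n (cols M) P" and M: "M \<in> carrier_mat n m" and x: "x \<in> carrier_vec m"
  shows "P *\<^sub>v (M *\<^sub>v x) = M *\<^sub>v x"
proof -
  note Pc = isPl_carrier[OF P]
  have "P * M = M"
  proof (rule eq_matI)
    fix i j assume i: "i < dim_row M" and j: "j < dim_col M"
    have "col (P * M) j = P *\<^sub>v col M j" using col_mult2[OF Pc M, of j] j M by simp
    also have "\<dots> = col M j" using isPl_fix[OF P, of "col M j"] j by (auto simp: set_cols_iff)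
    finally have "col (P * M) j $ i = col M j $ i" by simp
    then show "(P * M) $$ (i, j) = M $$ (i, j)" using i j Pc M by simp
  qed (use Pc M in auto)
  then show ?thesis using Pc M x by (metis assoc_mult_mat_vec)
qed

lemma isPl_ker_mat:
  assumes P: "isPl n (cols M) P" and M: "M \<in> carrier_mat n m" and u: "u \<in> carrier_vec n"
    and z: "transpose_mat M *\<^sub>v u = 0\<^sub>v m"
  shows "P *\<^sub>v u = 0\<^sub>v n"
proof (rule isPl_ker[OF P u])
  fix v assume "v \<in> set (cols M)"
  then obtain j where j: "j < m" and v: "v = col M j" using M by (auto simp: set_cols_iff)
  have "(transpose_mat M *\<^sub>v u) $ j = 0" using z j by simp
  then show "v \<bullet> u = 0" using j v M by simp
qed

lemma isPl_ker_rows: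
  assumes P: "isPl m (rows M) P" and M: "M \<in> carrier_mat n m" and u: "u \<in> carrier_vec m"
    and z: "M *\<^sub>v u = 0\<^sub>v n"
  shows "P *\<^sub>v u = 0\<^sub>v m"
proof (rule isPl_ker[OF P u])
  fix v assume "v \<in> set (rows M)"
  then obtain i where i: "i < n" and v: "v = row M i" using M by (auto simp: set_rows_iff)
  have "(M *\<^sub>v u) $ i = 0" using z i by simp
  then show "v \<bullet> u = 0" using i v M by simp
qed

definition PEN :: "real mat \<Rightarrow> real mat \<Rightarrow> bool" where
  "PEN M X \<longleftrightarrow> X \<in> carrier_mat (dim_col M) (dim_row M) \<and>
      M * X * M = M \<and> X * M * X = X \<and>
      transpose_mat (M * X) = M * X \<and> transpose_mat (X * M) = X * M"

lemma MX_isPl: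
  assumes M: "M \<in> carrier_mat n m" and X: "PEN M X"
  shows "isPl n (cols M) (M * X)"
proof -
  have Xc: "X \<in> carrier_mat m n" using X M unfolding PEN_def by auto
  have e1: "M * X * M = M" and t1: "transpose_mat (M * X) = M * X" using X unfolding PEN_def by auto
  have MXc: "M * X \<in> carrier_mat n n" using M Xc by simp
  show ?thesis unfolding isPl_def
  proof (intro conjI ballI impI)
    show "M * X \<in> carrier_mat n n" by (rule MXc)
  next
    fix x y :: "real vec" assume "x \<in> carrier_vec n" "y \<in> carrier_vec n"
    then show "(M * X *\<^sub>v x) \<bullet> y = x \<bullet> (M * X *\<^sub>v y)"
      using sym_iff_dot[OF MXc] t1 by blast
  next
    fix v assume "v \<in> set (cols M)"
    then obtain j where j: "j < m" and v: "v = col M j" using M by (auto simp: set_cols_iff)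
    have "col (M * X * M) j = (M * X) *\<^sub>v col M j" using MXc M j by (intro col_mult2) auto
    then show "M * X *\<^sub>v v = v" using e1 v by simp
  next
    fix u :: "real vec" assume u: "u \<in> carrier_vec n" and o: "\<forall>v\<in>set (cols M). v \<bullet> u = 0"
    have z: "transpose_mat M *\<^sub>v u = 0\<^sub>v m"
    proof (rule eq_vecI)
      fix j assume "j < dim_vec (0\<^sub>v m :: real vec)"
      then have j: "j < m" by simp
      have "col M j \<in> set (cols M)" using j M by (auto simp: set_cols_iff)
      then have "col M j \<bullet> u = 0" using o by blast
      then show "(transpose_mat M *\<^sub>v u) $ j = 0\<^sub>v m $ j" using j M by simp
    qed (use M in simp)
    have "M * X *\<^sub>v u = transpose_mat (M * X) *\<^sub>v u" using t1 by simp
    also have "\<dots> = (transpose_mat X * transpose_mat M) *\<^sub>v u" using transpose_mult[OF M Xc] by simp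
    also have "\<dots> = transpose_mat X *\<^sub>v (transpose_mat M *\<^sub>v u)" using M Xc u by (intro assoc_mult_mat_vec) auto
    also have "\<dots> = 0\<^sub>v n" unfolding z using Xc by (intro eq_vecI) (auto simp: scalar_prod_def)
    finally show "M * X *\<^sub>v u = 0\<^sub>v n" .
  qed
qed

lemma XM_isPl:
  assumes M: "M \<in> carrier_mat n m" and X: "PEN M X"
  shows "isPl m (rows M) (X * M)"
proof -
  have Xc: "X \<in> carrier_mat m n" using X M unfolding PEN_def by auto
  have e1: "M * X * M = M" and t2: "transpose_mat (X * M) = X * M" using X unfolding PEN_def by auto
  have XMc: "X * M \<in> carrier_mat m m" using M Xc by simp
  show ?thesis unfolding isPl_def
  proof (intro conjI ballI impI)
    show "X * M \<in> carrier_mat m m" by (rule XMc)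
  next
    fix x y :: "real vec" assume "x \<in> carrier_vec m" "y \<in> carrier_vec m"
    then show "(X * M *\<^sub>v x) \<bullet> y = x \<bullet> (X * M *\<^sub>v y)"
      using sym_iff_dot[OF XMc] t2 by blast
  next
    fix v assume "v \<in> set (rows M)"
    then obtain i where i: "i < n" and v: "v = row M i" using M by (auto simp: set_rows_iff)
    have "M * X * M = M * (X * M)" using M Xc by simp
    then have "transpose_mat M = transpose_mat (X * M) * transpose_mat M"
      using e1 transpose_mult[of M n m "X * M" m] M XMc by simp
    then have "X * M * transpose_mat M = transpose_mat M" using t2 by simp
    then have "col (X * M * transpose_mat M) i = col (transpose_mat M) i" by simp
    moreover have "col (X * M * transpose_mat M) i = (X * M) *\<^sub>v col (transpose_mat M) i"
      using XMc M i by (intro col_mult2) auto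
    ultimately show "X * M *\<^sub>v v = v" using v i M by simp
  next
    fix u :: "real vec" assume u: "u \<in> carrier_vec m" and o: "\<forall>v\<in>set (rows M). v \<bullet> u = 0"
    have z: "M *\<^sub>v u = 0\<^sub>v n"
    proof (rule eq_vecI)
      fix i assume "i < dim_vec (0\<^sub>v n :: real vec)"
      then have i: "i < n" by simp
      have "row M i \<in> set (rows M)" using i M by (auto simp: set_rows_iff)
      then have "row M i \<bullet> u = 0" using o by blast
      then show "(M *\<^sub>v u) $ i = 0\<^sub>v n $ i" using i M by simp
    qed (use M in simp)
    have "X * M *\<^sub>v u = X *\<^sub>v (M *\<^sub>v u)" using M Xc u by (intro assoc_mult_mat_vec) auto
    also have "\<dots> = 0\<^sub>v m" unfolding z using Xc by (intro eq_vecI) (auto simp: scalar_prod_def)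
    finally show "X * M *\<^sub>v u = 0\<^sub>v m" .
  qed
qed

lemma PEN_uniq:
  assumes M: "M \<in> carrier_mat n m" and X: "PEN M X" and Y: "PEN M Y"
  shows "X = Y"
proof -
  have Xc: "X \<in> carrier_mat m n" using X M unfolding PEN_def by auto
  have Yc: "Y \<in> carrier_mat m n" using Y M unfolding PEN_def by auto
  have a: "M * X = M * Y" using isPl_uniq[OF MX_isPl[OF M X] MX_isPl[OF M Y] cols_carrier[OF M]] .
  have b: "X * M = Y * M" using isPl_uniq[OF XM_isPl[OF M X] XM_isPl[OF M Y] rows_carrier[OF M]] .
  have "X = X * M * X" using X unfolding PEN_def by simp
  also have "\<dots> = Y * M * X" using b by simp
  also have "\<dots> = Y * (M * X)" using Yc M Xc by simp
  also have "\<dots> = Y * (M * Y)" using a by simp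
  also have "\<dots> = Y * M * Y" using Yc M by simp
  also have "\<dots> = Y" using Y unfolding PEN_def by simp
  finally show ?thesis .
qed



lemma PEN_exists:
  assumes M: "M \<in> carrier_mat n m"
  shows "\<exists>X. PEN M X"
proof -
  obtain P where P: "isPl n (cols M) P"
    and R: "\<forall>x\<in>carrier_vec n. \<exists>y\<in>carrier_vec (length (cols M)). P *\<^sub>v x = mat_of_cols n (cols M) *\<^sub>v y"
    using isPl_exists[OF cols_carrier[OF M]] by blast
  obtain Rm where Rm: "isPl m (rows M) Rm"
    using isPl_exists[OF rows_carrier[OF M]] by blast
  have MM: "mat_of_cols n (cols M) = M" using M mat_of_cols_cols[of M] by simp
  have R': "\<forall>x\<in>carrier_vec n. \<exists>y. y \<in> carrier_vec m \<and> P *\<^sub>v x = M *\<^sub>v y"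
    using R M unfolding MM by auto
  note Pc = isPl_carrier[OF P] and Rc = isPl_carrier[OF Rm]
  define f where "f j = (SOME y. y \<in> carrier_vec m \<and> P *\<^sub>v unit_vec n j = M *\<^sub>v y)" for j
  have f: "f j \<in> carrier_vec m \<and> P *\<^sub>v unit_vec n j = M *\<^sub>v f j" for j
    unfolding f_def by (rule someI_ex) (use R' in auto)
  define Z where "Z = mat_of_cols m (map f [0..<n])"
  have Zc: "Z \<in> carrier_mat m n" unfolding Z_def using mat_of_cols_carrier(1)[of m "map f [0..<n]"] by simp
  have MZ: "M * Z = P"
  proof (rule eq_matI)
    fix i j assume i: "i < dim_row P" and j: "j < dim_col P"
    have "col (M * Z) j = M *\<^sub>v col Z j" using col_mult2[OF M Zc, of j] j Pc by simp
    also have "\<dots> = M *\<^sub>v f j" using j Pc f[of j] unfolding Z_def by (subst col_mat_of_cols) auto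
    also have "\<dots> = P *\<^sub>v unit_vec n j" using f by simp
    finally have "col (M * Z) j $ i = (P *\<^sub>v unit_vec n j) $ i" by simp
    then show "(M * Z) $$ (i, j) = P $$ (i, j)" using i j M Zc Pc by simp
  qed (use M Zc Pc in auto)
  have V1: "P *\<^sub>v (M *\<^sub>v x) = M *\<^sub>v x" if "x \<in> carrier_vec m" for x
    using isPl_fix_mat[OF P M that] .
  have V2: "M *\<^sub>v (Z *\<^sub>v z) = P *\<^sub>v z" if "z \<in> carrier_vec n" for z
    using MZ M Zc that by (metis assoc_mult_mat_vec)
  have V3: "M *\<^sub>v (Rm *\<^sub>v y) = M *\<^sub>v y" if y: "y \<in> carrier_vec m" for y
  proof (rule eq_vecI)
    fix i assume "i < dim_vec (M *\<^sub>v y)"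
    then have i: "i < n" using M by simp
    have ri: "row M i \<in> set (rows M)" using i M by (auto simp: set_rows_iff)
    have rc: "row M i \<in> carrier_vec m" using M i by simp
    have "(M *\<^sub>v (Rm *\<^sub>v y)) $ i = row M i \<bullet> (Rm *\<^sub>v y)" using i M by simp
    also have "\<dots> = (Rm *\<^sub>v row M i) \<bullet> y" using isPl_sym[OF Rm rc y] by simp
    also have "\<dots> = row M i \<bullet> y" using isPl_fix[OF Rm ri] by simp
    finally show "(M *\<^sub>v (Rm *\<^sub>v y)) $ i = (M *\<^sub>v y) $ i" using i M by simp
  qed (use M Rc in simp)
  have V4: "Rm *\<^sub>v (Z *\<^sub>v (M *\<^sub>v x)) = Rm *\<^sub>v x" if x: "x \<in> carrier_vec m" for x
  proof -
    have Mx: "M *\<^sub>v x \<in> carrier_vec n" using M x by simp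
    have ZMx: "Z *\<^sub>v (M *\<^sub>v x) \<in> carrier_vec m" using Zc Mx by simp
    have um: "x - Z *\<^sub>v (M *\<^sub>v x) \<in> carrier_vec m" using x ZMx by simp
    have "M *\<^sub>v (x - Z *\<^sub>v (M *\<^sub>v x)) = M *\<^sub>v x - M *\<^sub>v (Z *\<^sub>v (M *\<^sub>v x))"
      using mult_minus_distrib_mat_vec[OF M x ZMx] .
    also have "\<dots> = 0\<^sub>v n" unfolding V2[OF Mx] V1[OF x] using Mx by simp
    finally have "Rm *\<^sub>v (x - Z *\<^sub>v (M *\<^sub>v x)) = 0\<^sub>v m" using isPl_ker_rows[OF Rm M um] by simp
    then have "Rm *\<^sub>v x - Rm *\<^sub>v (Z *\<^sub>v (M *\<^sub>v x)) = 0\<^sub>v m"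
      using mult_minus_distrib_mat_vec[OF Rc x ZMx] by simp
    then show ?thesis using vec_minus_zero[of "Rm *\<^sub>v x" m "Rm *\<^sub>v (Z *\<^sub>v (M *\<^sub>v x))"] Rc x ZMx by simp
  qed
  have V5: "P *\<^sub>v (P *\<^sub>v z) = P *\<^sub>v z" if "z \<in> carrier_vec n" for z
    using isPl_idem[OF P cols_carrier[OF M] that] .
  define X where "X = Rm * Z * P"
  have Xc: "X \<in> carrier_mat m n" unfolding X_def using Rc Zc Pc by simp
  have XV: "X *\<^sub>v z = Rm *\<^sub>v (Z *\<^sub>v (P *\<^sub>v z))" if z: "z \<in> carrier_vec n" for z
    unfolding X_def using assoc_mult_mat_vec[of "Rm * Z" m n P n z] assoc_mult_mat_vec[of Rm m m Z n "P *\<^sub>v z"] Rc Zc Pc z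
    by simp
  have MX: "M * X = P"
  proof (rule mat_eq_vec[of _ n n])
    fix z :: "real vec" assume z: "z \<in> carrier_vec n"
    have "M * X *\<^sub>v z = M *\<^sub>v (Rm *\<^sub>v (Z *\<^sub>v (P *\<^sub>v z)))" using assoc_mult_mat_vec[OF M Xc z] XV[OF z] by simp
    also have "\<dots> = P *\<^sub>v z" using V3 V2 V5 Zc Pc z by simp
    finally show "M * X *\<^sub>v z = P *\<^sub>v z" .
  qed (use M Xc Pc in auto)
  have XM: "X * M = Rm"
  proof (rule mat_eq_vec[of _ m m])
    fix x :: "real vec" assume x: "x \<in> carrier_vec m"
    have "X * M *\<^sub>v x = Rm *\<^sub>v (Z *\<^sub>v (P *\<^sub>v (M *\<^sub>v x)))" using assoc_mult_mat_vec[OF Xc M x] XV[of "M *\<^sub>v x"] M x by simp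
    also have "\<dots> = Rm *\<^sub>v x" using V1 V4 x by simp
    finally show "X * M *\<^sub>v x = Rm *\<^sub>v x" .
  qed (use M Xc Rc in auto)
  have tP: "transpose_mat P = P" using sym_iff_dot[OF Pc] isPl_sym[OF P] by blast
  have tR: "transpose_mat Rm = Rm" using sym_iff_dot[OF Rc] isPl_sym[OF Rm] by blast
  have "M * X * M = M"
  proof (rule mat_eq_vec[of _ n m])
    fix x :: "real vec" assume x: "x \<in> carrier_vec m"
    have "M * X * M *\<^sub>v x = P *\<^sub>v (M *\<^sub>v x)" unfolding MX using assoc_mult_mat_vec[OF Pc M x] by simp
    then show "M * X * M *\<^sub>v x = M *\<^sub>v x" using V1 x by simp
  qed (use M Xc in auto)
  moreover have "X * M * X = X"
  proof -
    have "X * M * X = Rm * X" unfolding XM ..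
    also have "\<dots> = X"
    proof (rule mat_eq_vec[of _ m n])
      fix z :: "real vec" assume z: "z \<in> carrier_vec n"
      have "Rm * X *\<^sub>v z = Rm *\<^sub>v (Rm *\<^sub>v (Z *\<^sub>v (P *\<^sub>v z)))" using assoc_mult_mat_vec[OF Rc Xc z] XV[OF z] by simp
      also have "\<dots> = Rm *\<^sub>v (Z *\<^sub>v (P *\<^sub>v z))"
        using isPl_idem[OF Rm rows_carrier[OF M]] Zc Pc z by simp
      also have "\<dots> = X *\<^sub>v z" using XV[OF z] by simp
      finally show "Rm * X *\<^sub>v z = X *\<^sub>v z" .
    qed (use Rc Xc in auto)
    finally show ?thesis .
  qed
  ultimately have "PEN M X" unfolding PEN_def using Xc M MX XM tP tR by simp
  then show ?thesis by blast
qed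

lemma pinv_PEN:
  assumes M: "M \<in> carrier_mat n m"
  shows "PEN M (pinv M)"
proof -
  obtain X where X: "PEN M X" using PEN_exists[OF M] by blast
  have "PEN M (THE X. PEN M X)"
    by (rule theI[of "PEN M", OF X]) (rule PEN_uniq[OF M _ X])
  moreover have "pinv M = (THE X. PEN M X)" unfolding pinv_def PEN_def ..
  ultimately show ?thesis by simp
qed

lemma pinv_isPl:
  assumes M: "M \<in> carrier_mat n m"
  shows "isPl n (cols M) (M * pinv M)"
  by (rule MX_isPl[OF M pinv_PEN[OF M]])



lemma col_as_mult: "(N :: real mat) \<in> carrier_mat n m \<Longrightarrow> j < m \<Longrightarrow> col N j = N *\<^sub>v unit_vec m j"
  by (intro eq_vecI) auto

definition OPC :: "nat \<Rightarrow> real vec set \<Rightarrow> real mat \<Rightarrow> bool" where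
  "OPC n V P \<longleftrightarrow> P \<in> carrier_mat n n \<and>
      (\<forall>v\<in>carrier_vec n. P *\<^sub>v v \<in> V \<and> (\<forall>u\<in>V. (v - P *\<^sub>v v) \<bullet> u = 0))"

lemma orth_proj_eq:
  assumes N: "N \<in> carrier_mat n m" and Pp: "isPl n (cols N) Pp"
  shows "orth_proj n (orth_compl n (col_range N)) = 1\<^sub>m n - Pp"
proof -
  let ?V = "orth_compl n (col_range N)"
  note Pc = isPl_carrier[OF Pp]
  define S where "S = 1\<^sub>m n - Pp"
  have Sc: "S \<in> carrier_mat n n" unfolding S_def using Pc by (rule minus_carrier_mat)
  have Sv: "S *\<^sub>v v = v - Pp *\<^sub>v v" if v: "v \<in> carrier_vec n" for v
    unfolding S_def using minus_mult_distrib_mat_vec[of "1\<^sub>m n" n n Pp v] Pc v by simp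
  have OS: "OPC n ?V S" unfolding OPC_def
  proof (intro conjI ballI)
    show "S \<in> carrier_mat n n" by (rule Sc)
  next
    fix v :: "real vec" assume v: "v \<in> carrier_vec n"
    have Pv: "Pp *\<^sub>v v \<in> carrier_vec n" using Pc v by simp
    show "S *\<^sub>v v \<in> ?V" unfolding orth_compl_def
    proof (intro CollectI conjI ballI)
      show "S *\<^sub>v v \<in> carrier_vec n" using Sc v by simp
    next
      fix u assume "u \<in> col_range N"
      then obtain w where w: "w \<in> carrier_vec m" and u: "u = N *\<^sub>v w"
        using N unfolding col_range_def by auto
      have Nw: "N *\<^sub>v w \<in> carrier_vec n" using N w by simp
      have "(v - Pp *\<^sub>v v) \<bullet> (N *\<^sub>v w) = v \<bullet> (N *\<^sub>v w) - (Pp *\<^sub>v v) \<bullet> (N *\<^sub>v w)"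
        using minus_scalar_prod_distrib[OF v Pv Nw] .
      also have "(Pp *\<^sub>v v) \<bullet> (N *\<^sub>v w) = v \<bullet> (Pp *\<^sub>v (N *\<^sub>v w))" using isPl_sym[OF Pp v Nw] .
      also have "\<dots> = v \<bullet> (N *\<^sub>v w)" using isPl_fix_mat[OF Pp N w] by simp
      finally show "(S *\<^sub>v v) \<bullet> u = 0" using Sv[OF v] u by simp
    qed
  next
    fix v u :: "real vec" assume v: "v \<in> carrier_vec n" and u: "u \<in> ?V"
    have uc: "u \<in> carrier_vec n" using u unfolding orth_compl_def by simp
    have Pv: "Pp *\<^sub>v v \<in> carrier_vec n" using Pc v by simp
    have "v - S *\<^sub>v v = Pp *\<^sub>v v" unfolding Sv[OF v] using v Pv by (intro eq_vecI) auto
    moreover have "Pp *\<^sub>v u = 0\<^sub>v n"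
    proof (rule isPl_ker[OF Pp uc])
      fix c assume "c \<in> set (cols N)"
      then obtain j where j: "j < m" and c: "c = col N j" using N by (auto simp: set_cols_iff)
      have "c \<in> col_range N" unfolding col_range_def c col_as_mult[OF N j] using N by auto
      then have "u \<bullet> c = 0" using u unfolding orth_compl_def by auto
      moreover have "c \<in> carrier_vec n" using c N j by simp
      ultimately show "c \<bullet> u = 0" using comm_scalar_prod[OF uc] by metis
    qed
    ultimately show "(v - S *\<^sub>v v) \<bullet> u = 0" using isPl_sym[OF Pp v uc] uc v by simp
  qed
  have uniq: "T = S" if T: "OPC n ?V T" for T
  proof -
    have Tc: "T \<in> carrier_mat n n" using T unfolding OPC_def by simp
    show ?thesis
    proof (rule mat_eq_vec[OF Tc Sc])
      fix v :: "real vec" assume v: "v \<in> carrier_vec n"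
      have Tv: "T *\<^sub>v v \<in> ?V" and To: "\<forall>u\<in>?V. (v - T *\<^sub>v v) \<bullet> u = 0" using T v unfolding OPC_def by auto
      have Sv': "S *\<^sub>v v \<in> ?V" and So: "\<forall>u\<in>?V. (v - S *\<^sub>v v) \<bullet> u = 0" using OS v unfolding OPC_def by auto
      have Tvc: "T *\<^sub>v v \<in> carrier_vec n" and Svc: "S *\<^sub>v v \<in> carrier_vec n" using Tc Sc v by auto
      define d where "d = T *\<^sub>v v - S *\<^sub>v v"
      have dc: "d \<in> carrier_vec n" unfolding d_def using Tvc Svc by simp
      have dV: "d \<in> ?V" unfolding orth_compl_def
      proof (intro CollectI conjI ballI)
        show "d \<in> carrier_vec n" by (rule dc)
      next
        fix u assume u: "u \<in> col_range N"
        have uc: "u \<in> carrier_vec n" using u N unfolding col_range_def by auto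
        have "(T *\<^sub>v v) \<bullet> u = 0" "(S *\<^sub>v v) \<bullet> u = 0" using Tv Sv' u unfolding orth_compl_def by auto
        then show "d \<bullet> u = 0" unfolding d_def using minus_scalar_prod_distrib[OF Tvc Svc uc] by simp
      qed
      have "d = (v - S *\<^sub>v v) - (v - T *\<^sub>v v)" unfolding d_def using v Tvc Svc Tc Sc by (intro eq_vecI) auto
      then have "d \<bullet> d = (v - S *\<^sub>v v) \<bullet> d - (v - T *\<^sub>v v) \<bullet> d"
        using minus_scalar_prod_distrib[of "v - S *\<^sub>v v" n "v - T *\<^sub>v v" d] v Tvc Svc dc by simp
      also have "\<dots> = 0" using To So dV by simp
      finally have "d = 0\<^sub>v n" using dot_self_zero[OF dc] by simp
      then show "T *\<^sub>v v = S *\<^sub>v v" unfolding d_def using vec_minus_zero[OF Tvc Svc] by simp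
    qed
  qed
  have "OPC n ?V (THE P. OPC n ?V P)"
    by (rule theI[of "OPC n ?V", OF OS]) (rule uniq)
  moreover have "orth_proj n ?V = (THE P. OPC n ?V P)" unfolding orth_proj_def OPC_def ..
  ultimately have "OPC n ?V (orth_proj n ?V)" by simp
  then show ?thesis using uniq S_def by simp
qed



lemma rank1_mult:
  fixes P :: "real mat" and w x :: "real vec"
  assumes Pc: "P \<in> carrier_mat n n" and wc: "w \<in> carrier_vec n" and x: "x \<in> carrier_vec n"
  shows "mat n n (\<lambda>(i,j). P $$ (i,j) + w $ i * w $ j / c) *\<^sub>v x = P *\<^sub>v x + ((w \<bullet> x) / c) \<cdot>\<^sub>v w"
proof (rule eq_vecI)
  fix i assume "i < dim_vec (P *\<^sub>v x + ((w \<bullet> x) / c) \<cdot>\<^sub>v w)"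
  then have i: "i < n" using Pc wc by simp
  have "(\<Sum>j = 0..<n. (P $$ (i, j) + w $ i * w $ j / c) * x $ j)
      = (\<Sum>j = 0..<n. P $$ (i, j) * x $ j) + (\<Sum>j = 0..<n. w $ j * x $ j) / c * w $ i"
  proof -
    have h: "\<And>j. (P $$ (i, j) + w $ i * w $ j / c) * x $ j = P $$ (i, j) * x $ j + w $ i * (w $ j * x $ j / c)"
      by (simp add: algebra_simps)
    show ?thesis unfolding h sum.distrib sum_distrib_left[symmetric] sum_divide_distrib[symmetric]
      by simp
  qed
  then show "(mat n n (\<lambda>(i,j). P $$ (i,j) + w $ i * w $ j / c) *\<^sub>v x) $ i = (P *\<^sub>v x + ((w \<bullet> x) / c) \<cdot>\<^sub>v w) $ i"
    using i x Pc wc by (simp add: scalar_prod_def)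
qed (use Pc wc in simp)

lemma mat_times_mat_of_cols:
  fixes A :: "real mat"
  assumes A: "A \<in> carrier_mat n n" and vs: "set vs \<subseteq> carrier_vec n"
  shows "mat_of_cols n (map (\<lambda>v. A *\<^sub>v v) vs) = A * mat_of_cols n vs"
proof (rule eq_matI)
  fix i j assume i: "i < dim_row (A * mat_of_cols n vs)" and j: "j < dim_col (A * mat_of_cols n vs)"
  have vj: "vs ! j \<in> carrier_vec n" using vs j by auto
  have vv: "vec n (\<lambda>k. vs ! j $ k) = vs ! j" using vj by (intro eq_vecI) auto
  show "mat_of_cols n (map (\<lambda>v. A *\<^sub>v v) vs) $$ (i, j) = (A * mat_of_cols n vs) $$ (i, j)"
    using i j A vj vv by (simp add: mat_of_cols_def)
qed (use A in auto)

lemma mat_diag_pow: "mat_diag r lam ^\<^sub>m t = mat_diag r (\<lambda>i. (lam i :: real) ^ t)"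
proof (induction t)
  case 0
  show ?case using mat_diag_one[of r] by (simp add: mat_diag_def)
next
  case (Suc t)
  then show ?case by (simp add: mat_diag_diag ac_simps)
qed

lemma transpose_mat_diag: "transpose_mat (mat_diag r f) = mat_diag r f"
  by (rule eq_matI) (auto simp: mat_diag_def)

lemma mat_of_rows_single: "v \<in> carrier_vec r \<Longrightarrow> z \<in> carrier_vec r \<Longrightarrow>
    mat_of_rows r [v] *\<^sub>v z = vec 1 (\<lambda>_. v \<bullet> z)"
  by (rule eq_vecI) (auto simp: mat_of_rows_def scalar_prod_def)

lemma mat_of_cols_single: "(v :: real vec) \<in> carrier_vec r \<Longrightarrow> t \<in> carrier_vec 1 \<Longrightarrow>
    mat_of_cols r [v] *\<^sub>v t = (t $ 0) \<cdot>\<^sub>v v"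
  by (rule eq_vecI) (auto simp: mat_of_cols_def scalar_prod_def)



theorem lemma1:
  fixes n r k :: nat and A Q Qbar :: "real mat" and lam :: "nat \<Rightarrow> real"
    and \<nu> \<mu> x0 :: "real vec"
  assumes A_dim: "A \<in> carrier_mat n n"
    and A_sym: "transpose_mat A = A"
    and rank: "vec_space.rank n A = r" and r_pos: "1 \<le> r"
    and Q_dim: "Q \<in> carrier_mat n r"
    and Q_orth: "transpose_mat Q * Q = 1\<^sub>m r"
    and lam_nz: "\<forall>i<r. lam i \<noteq> 0"
    and Q_eig: "\<forall>i<r. A *\<^sub>v col Q i = lam i \<cdot>\<^sub>v col Q i"
    and A_decomp: "A = Q * mat_diag r lam * transpose_mat Q"
    and Qbar_dim: "Qbar \<in> carrier_mat n (n - r)"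
    and Qbar_orth: "transpose_mat Qbar * Qbar = 1\<^sub>m (n - r)"
    and Qbar_null: "{v \<in> carrier_vec n. A *\<^sub>v v = 0\<^sub>v n} = col_range Qbar"
    and nu_dim: "\<nu> \<in> carrier_vec r" and nu_nz: "\<nu> \<noteq> 0\<^sub>v r"
    and mu_dim: "\<mu> \<in> carrier_vec (n - r)"
    and x0_def: "x0 = Q *\<^sub>v \<nu> + Qbar *\<^sub>v \<mu>"
    and k_pos: "1 \<le> k" and k_lt: "k < n"
    and S_nz: "vnorm (Smat n A x0 k *\<^sub>v (Q *\<^sub>v ((mat_diag r lam ^\<^sub>m k) *\<^sub>v \<nu>))) \<noteq> 0"
  shows "A - Ahat n A x0 k =
    A * (1\<^sub>m n - (1 / (vnorm (Smat n A x0 k *\<^sub>v (Q *\<^sub>v ((mat_diag r lam ^\<^sub>m k) *\<^sub>v \<nu>))))\<^sup>2) \<cdot>\<^sub>m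
         (Smat n A x0 k * Q * (mat_diag r lam ^\<^sub>m k) * mat_of_cols r [\<nu>]
           * mat_of_rows r [\<nu>] * (mat_diag r lam ^\<^sub>m k) * transpose_mat Q))
      * Smat n A x0 k"
proof -
  have x0c: "x0 \<in> carrier_vec n" using x0_def Q_dim nu_dim Qbar_dim mu_dim by simp
  have itc: "iter A x0 t \<in> carrier_vec n" for t
    by (induction t) (use x0c A_dim in auto)
  have QtQ: "transpose_mat Q *\<^sub>v (Q *\<^sub>v y) = y" if y: "y \<in> carrier_vec r" for y
  proof -
    have "transpose_mat Q *\<^sub>v (Q *\<^sub>v y) = (transpose_mat Q * Q) *\<^sub>v y"
      using assoc_mult_mat_vec[of "transpose_mat Q" r n Q r y] Q_dim y by simp
    then show ?thesis using Q_orth y by simp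
  qed
  have AQ: "A *\<^sub>v (Q *\<^sub>v y) = Q *\<^sub>v (mat_diag r lam *\<^sub>v y)" if y: "y \<in> carrier_vec r" for y
  proof -
    have QD: "Q * mat_diag r lam \<in> carrier_mat n r" using Q_dim by simp
    have Qy: "Q *\<^sub>v y \<in> carrier_vec n" using Q_dim y by simp
    have "A *\<^sub>v (Q *\<^sub>v y) = (Q * mat_diag r lam) *\<^sub>v (transpose_mat Q *\<^sub>v (Q *\<^sub>v y))"
      using A_decomp assoc_mult_mat_vec[OF QD _ Qy, of "transpose_mat Q"] Q_dim by simp
    also have "\<dots> = (Q * mat_diag r lam) *\<^sub>v y" using QtQ[OF y] by simp
    also have "\<dots> = Q *\<^sub>v (mat_diag r lam *\<^sub>v y)" using assoc_mult_mat_vec[of Q n r "mat_diag r lam" r y] Q_dim y by simp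
    finally show ?thesis .
  qed
  have Qbar0: "A *\<^sub>v (Qbar *\<^sub>v \<mu>) = 0\<^sub>v n"
  proof -
    have "Qbar *\<^sub>v \<mu> \<in> col_range Qbar" unfolding col_range_def using Qbar_dim mu_dim by auto
    then show ?thesis using Qbar_null by auto
  qed
  have Dp: "mat_diag r lam *\<^sub>v (mat_diag r (\<lambda>i. lam i ^ t) *\<^sub>v \<nu>) = mat_diag r (\<lambda>i. lam i ^ Suc t) *\<^sub>v \<nu>" for t
  proof -
    have "mat_diag r lam *\<^sub>v (mat_diag r (\<lambda>i. lam i ^ t) *\<^sub>v \<nu>) = (mat_diag r lam * mat_diag r (\<lambda>i. lam i ^ t)) *\<^sub>v \<nu>"
      using assoc_mult_mat_vec[of "mat_diag r lam" r r "mat_diag r (\<lambda>i. lam i ^ t)" r \<nu>] nu_dim by simp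
    then show ?thesis by (simp add: mat_diag_diag)
  qed
  have itQ: "iter A x0 t = Q *\<^sub>v (mat_diag r (\<lambda>i. lam i ^ t) *\<^sub>v \<nu>)" if t: "1 \<le> t" for t
    using t
  proof (induction t)
    case 0
    then show ?case by simp
  next
    case (Suc t)
    show ?case
    proof (cases "t = 0")
      case True
      have Qnu: "Q *\<^sub>v \<nu> \<in> carrier_vec n" "Qbar *\<^sub>v \<mu> \<in> carrier_vec n" using Q_dim Qbar_dim nu_dim mu_dim by auto
      have "iter A x0 (Suc t) = A *\<^sub>v (Q *\<^sub>v \<nu>) + A *\<^sub>v (Qbar *\<^sub>v \<mu>)"
        using True x0_def mult_add_distrib_mat_vec[OF A_dim Qnu] by simp
      also have "\<dots> = Q *\<^sub>v (mat_diag r lam *\<^sub>v \<nu>)"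
      proof -
        have "Q *\<^sub>v (mat_diag r lam *\<^sub>v \<nu>) \<in> carrier_vec n" using mult_mat_vec_carrier[OF Q_dim mult_mat_vec_carrier[OF mat_diag_dim nu_dim]] .
        then show ?thesis using AQ[OF nu_dim] Qbar0 by simp
      qed
      finally show ?thesis using True by simp
    next
      case False
      then have "iter A x0 t = Q *\<^sub>v (mat_diag r (\<lambda>i. lam i ^ t) *\<^sub>v \<nu>)" using Suc by simp
      then have "iter A x0 (Suc t) = A *\<^sub>v (Q *\<^sub>v (mat_diag r (\<lambda>i. lam i ^ t) *\<^sub>v \<nu>))" by simp
      also have "\<dots> = Q *\<^sub>v (mat_diag r lam *\<^sub>v (mat_diag r (\<lambda>i. lam i ^ t) *\<^sub>v \<nu>))"
        using AQ[OF mult_mat_vec_carrier[OF mat_diag_dim nu_dim]] by simp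
      also have "\<dots> = Q *\<^sub>v (mat_diag r (\<lambda>i. lam i ^ Suc t) *\<^sub>v \<nu>)" using Dp by simp
      finally show ?thesis .
    qed
  qed
  define vsp where "vsp = map (iter A x0) [0..<k]"
  define w where "w = iter A x0 k"
  have wc: "w \<in> carrier_vec n" unfolding w_def by (rule itc)
  have vspc: "set vsp \<subseteq> carrier_vec n" unfolding vsp_def using itc by auto
  have vskc: "set (vsp @ [w]) \<subseteq> carrier_vec n" using vspc wc by auto
  have Xk: "Xmat n A x0 k = mat_of_cols n (vsp @ [w])" unfolding Xmat_def vsp_def w_def by simp
  have Xp: "Xmat n A x0 (k - 1) = mat_of_cols n vsp" unfolding Xmat_def vsp_def using k_pos by simp
  have Xkc: "Xmat n A x0 k \<in> carrier_mat n (Suc k)" unfolding Xk using mat_of_cols_carrier(1)[of n "vsp @ [w]"] unfolding vsp_def by simp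
  have mapY: "map (iter A x0) [1..<Suc (Suc j)] = map (\<lambda>v. A *\<^sub>v v) (map (iter A x0) [0..<Suc j])" for j
    by (induction j) auto
  have Yk: "Ymat n A x0 k = A * Xmat n A x0 k"
    unfolding Ymat_def mapY Xmat_def
    by (rule mat_times_mat_of_cols[OF A_dim]) (use itc in auto)
  obtain Pp where Pp: "isPl n vsp Pp" using isPl_exists[OF vspc] by blast
  note Ppc = isPl_carrier[OF Pp]
  have colsp: "cols (mat_of_cols n vsp) = vsp" using vspc by simp
  have Sm: "Smat n A x0 k = 1\<^sub>m n - Pp"
    unfolding Smat_def Xp using orth_proj_eq[of "mat_of_cols n vsp" n "length vsp" Pp] Pp colsp by simp
  define S where "S = 1\<^sub>m n - Pp"
  have Sc: "S \<in> carrier_mat n n" unfolding S_def using Ppc by (rule minus_carrier_mat)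
  have Sv: "S *\<^sub>v v = v - Pp *\<^sub>v v" if v: "v \<in> carrier_vec n" for v
    unfolding S_def using minus_mult_distrib_mat_vec[of "1\<^sub>m n" n n Pp v] Ppc v by simp
  have Ssym: "(S *\<^sub>v x) \<bullet> y = x \<bullet> (S *\<^sub>v y)" if x: "x \<in> carrier_vec n" and y: "y \<in> carrier_vec n" for x y
  proof -
    have Px: "Pp *\<^sub>v x \<in> carrier_vec n" and Py: "Pp *\<^sub>v y \<in> carrier_vec n" using Ppc x y by auto
    show ?thesis unfolding Sv[OF x] Sv[OF y]
      using minus_scalar_prod_distrib[OF x Px y] scalar_prod_minus_distrib[OF x y Py] isPl_sym[OF Pp x y] by simp
  qed
  have Sidem: "S *\<^sub>v (S *\<^sub>v x) = S *\<^sub>v x" if x: "x \<in> carrier_vec n" for x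
  proof -
    have Px: "Pp *\<^sub>v x \<in> carrier_vec n" using Ppc x by auto
    have "Pp *\<^sub>v (x - Pp *\<^sub>v x) = Pp *\<^sub>v x - Pp *\<^sub>v (Pp *\<^sub>v x)"
      using mult_minus_distrib_mat_vec[OF Ppc x Px] .
    also have "\<dots> = 0\<^sub>v n" using isPl_idem[OF Pp vspc x] Px by simp
    finally have "Pp *\<^sub>v (x - Pp *\<^sub>v x) = 0\<^sub>v n" .
    then show ?thesis unfolding Sv[OF x] using Sv[of "x - Pp *\<^sub>v x"] x Px by (intro eq_vecI) auto
  qed
  define s where "s = S *\<^sub>v w"
  have sc: "s \<in> carrier_vec n" unfolding s_def using Sc wc by simp
  define c where "c = s \<bullet> s"
  have c_ge: "c \<ge> 0" unfolding c_def scalar_prod_def by (auto intro: sum_nonneg)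
  have wQ: "Q *\<^sub>v ((mat_diag r lam ^\<^sub>m k) *\<^sub>v \<nu>) = w"
    unfolding w_def mat_diag_pow using itQ[OF k_pos] by simp
  have vn: "vnorm (Smat n A x0 k *\<^sub>v (Q *\<^sub>v ((mat_diag r lam ^\<^sub>m k) *\<^sub>v \<nu>))) = sqrt c"
    unfolding wQ Sm S_def[symmetric] s_def[symmetric] vnorm_def c_def ..
  have c0: "c \<noteq> 0" using S_nz unfolding vn by simp
  have vn2: "(vnorm (Smat n A x0 k *\<^sub>v (Q *\<^sub>v ((mat_diag r lam ^\<^sub>m k) *\<^sub>v \<nu>))))\<^sup>2 = c"
    unfolding vn using c_ge by simp
  have sw: "s \<bullet> w = c"
  proof -
    have "s \<bullet> w = w \<bullet> s" using comm_scalar_prod[OF sc wc] .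
    also have "\<dots> = w \<bullet> (S *\<^sub>v (S *\<^sub>v w))" unfolding s_def using Sidem[OF wc] by simp
    also have "\<dots> = (S *\<^sub>v w) \<bullet> (S *\<^sub>v w)" using Ssym[OF wc, of "S *\<^sub>v w"] Sc wc by simp
    finally show ?thesis unfolding c_def s_def .
  qed
  have su: "s \<bullet> u = w \<bullet> u - w \<bullet> (Pp *\<^sub>v u)" if u: "u \<in> carrier_vec n" for u
  proof -
    have Pu: "Pp *\<^sub>v u \<in> carrier_vec n" using Ppc u by simp
    show ?thesis unfolding s_def using Ssym[OF wc u] Sv[OF u] scalar_prod_minus_distrib[OF wc u Pu] by simp
  qed
  define P' where "P' = mat n n (\<lambda>(i,j). Pp $$ (i,j) + s $ i * s $ j / c)"
  have P'c: "P' \<in> carrier_mat n n" unfolding P'_def by simp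
  have P'x: "P' *\<^sub>v x = Pp *\<^sub>v x + ((s \<bullet> x) / c) \<cdot>\<^sub>v s" if x: "x \<in> carrier_vec n" for x
    unfolding P'_def by (rule rank1_mult[OF Ppc sc x])
  have P'isPl: "isPl n (vsp @ [w]) P'"
    unfolding isPl_def
  proof (intro conjI ballI impI)
    show "P' \<in> carrier_mat n n" by (rule P'c)
  next
    fix x y :: "real vec" assume x: "x \<in> carrier_vec n" and y: "y \<in> carrier_vec n"
    have Px: "Pp *\<^sub>v x \<in> carrier_vec n" and Py: "Pp *\<^sub>v y \<in> carrier_vec n" using Ppc x y by auto
    have "(P' *\<^sub>v x) \<bullet> y = (Pp *\<^sub>v x) \<bullet> y + (s \<bullet> x) / c * (s \<bullet> y)"
      unfolding P'x[OF x] using Px sc y by (simp add: add_scalar_prod_distrib[of _ n])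
    also have "\<dots> = x \<bullet> (Pp *\<^sub>v y) + (s \<bullet> y) / c * (x \<bullet> s)"
      using isPl_sym[OF Pp x y] comm_scalar_prod[OF sc x] by simp
    also have "\<dots> = x \<bullet> (P' *\<^sub>v y)"
      unfolding P'x[OF y] using Py sc x by (simp add: scalar_prod_add_distrib[of _ n])
    finally show "(P' *\<^sub>v x) \<bullet> y = x \<bullet> (P' *\<^sub>v y)" .
  next
    fix u assume u: "u \<in> set (vsp @ [w])"
    show "P' *\<^sub>v u = u"
    proof (cases "u = w")
      case True
      have Pw: "Pp *\<^sub>v w \<in> carrier_vec n" using Ppc wc by simp
      have "P' *\<^sub>v w = Pp *\<^sub>v w + s" unfolding P'x[OF wc] sw using c0 by simp
      also have "\<dots> = w" unfolding s_def Sv[OF wc] using wc Pw Ppc by (intro eq_vecI) auto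
      finally show ?thesis using True by simp
    next
      case False
      then have u': "u \<in> set vsp" using u by simp
      then have uc: "u \<in> carrier_vec n" using vspc by auto
      have "s \<bullet> u = 0" using su[OF uc] isPl_fix[OF Pp u'] by simp
      then show ?thesis unfolding P'x[OF uc] isPl_fix[OF Pp u'] using uc sc by (intro eq_vecI) auto
    qed
  next
    fix u :: "real vec" assume uc: "u \<in> carrier_vec n" and orth: "\<forall>v'\<in>set (vsp @ [w]). v' \<bullet> u = 0"
    have Pu: "Pp *\<^sub>v u = 0\<^sub>v n" using isPl_ker[OF Pp uc] orth by auto
    have "s \<bullet> u = 0" using su[OF uc] Pu orth wc by simp
    then show "P' *\<^sub>v u = 0\<^sub>v n" unfolding P'x[OF uc] Pu using sc by (intro eq_vecI) auto
  qed
  have colsk: "cols (Xmat n A x0 k) = vsp @ [w]" unfolding Xk using vskc by simp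
  have XP: "Xmat n A x0 k * pinv (Xmat n A x0 k) = P'"
    using isPl_uniq[OF pinv_isPl[OF Xkc] _ cols_carrier[OF Xkc]] P'isPl colsk by simp
  have pXc: "pinv (Xmat n A x0 k) \<in> carrier_mat (Suc k) n"
    using pinv_PEN[OF Xkc] Xkc unfolding PEN_def by auto
  have Ah: "Ahat n A x0 k = A * P'"
    unfolding Ahat_def Yk using assoc_mult_mat[OF A_dim Xkc pXc] XP by simp
  define Dk where "Dk = mat_diag r lam ^\<^sub>m k"
  have Dkc: "Dk \<in> carrier_mat r r" unfolding Dk_def by simp
  have DkT: "transpose_mat Dk = Dk" unfolding Dk_def mat_diag_pow transpose_mat_diag ..
  define B where "B = S * Q * Dk * mat_of_cols r [\<nu>] * mat_of_rows r [\<nu>] * Dk * transpose_mat Q"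
  have Mr: "mat_of_rows r [\<nu>] \<in> carrier_mat 1 r" by (simp add: mat_of_rows_def)
  have Mc: "mat_of_cols r [\<nu>] \<in> carrier_mat r 1" by (simp add: mat_of_cols_def)
  have c1: "S * Q \<in> carrier_mat n r" by (rule mult_carrier_mat[OF Sc Q_dim])
  have c2: "S * Q * Dk \<in> carrier_mat n r" by (rule mult_carrier_mat[OF c1 Dkc])
  have c3: "S * Q * Dk * mat_of_cols r [\<nu>] \<in> carrier_mat n 1" by (rule mult_carrier_mat[OF c2 Mc])
  have c4: "S * Q * Dk * mat_of_cols r [\<nu>] * mat_of_rows r [\<nu>] \<in> carrier_mat n r" by (rule mult_carrier_mat[OF c3 Mr])
  have c5: "S * Q * Dk * mat_of_cols r [\<nu>] * mat_of_rows r [\<nu>] * Dk \<in> carrier_mat n r" by (rule mult_carrier_mat[OF c4 Dkc])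
  have Bc: "B \<in> carrier_mat n n" unfolding B_def
    by (rule mult_carrier_mat[OF c5]) (use Q_dim in simp)
  have Bv: "B *\<^sub>v y = (y \<bullet> w) \<cdot>\<^sub>v s" if y: "y \<in> carrier_vec n" for y
  proof -
    define t where "t = Dk *\<^sub>v (transpose_mat Q *\<^sub>v y)"
    have Qty: "transpose_mat Q *\<^sub>v y \<in> carrier_vec r" using Q_dim y by simp
    have tc: "t \<in> carrier_vec r" unfolding t_def using Dkc Qty by simp
    have tdef: "Dk *\<^sub>v (transpose_mat Q *\<^sub>v y) = t" unfolding t_def ..
    define a where "a = \<nu> \<bullet> t"
    have Dnu: "Dk *\<^sub>v \<nu> \<in> carrier_vec r" using Dkc nu_dim by simp
    have wD: "w = Q *\<^sub>v (Dk *\<^sub>v \<nu>)" using wQ unfolding Dk_def by simp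
    have "B *\<^sub>v y = S *\<^sub>v (Q *\<^sub>v (Dk *\<^sub>v (mat_of_cols r [\<nu>] *\<^sub>v (mat_of_rows r [\<nu>] *\<^sub>v t))))"
      unfolding B_def
      using tdef assoc_mult_mat_vec[OF c5 _ y, of "transpose_mat Q"] Q_dim
        assoc_mult_mat_vec[OF c4 Dkc Qty]
        assoc_mult_mat_vec[OF c3 Mr tc]
        assoc_mult_mat_vec[OF c2 Mc, of "mat_of_rows r [\<nu>] *\<^sub>v t"]
        assoc_mult_mat_vec[OF c1 Dkc, of "mat_of_cols r [\<nu>] *\<^sub>v (mat_of_rows r [\<nu>] *\<^sub>v t)"]
        assoc_mult_mat_vec[OF Sc Q_dim, of "Dk *\<^sub>v (mat_of_cols r [\<nu>] *\<^sub>v (mat_of_rows r [\<nu>] *\<^sub>v t))"]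
        Mr Mc tc Dkc
      by simp
    also have "mat_of_cols r [\<nu>] *\<^sub>v (mat_of_rows r [\<nu>] *\<^sub>v t) = a \<cdot>\<^sub>v \<nu>"
      unfolding mat_of_rows_single[OF nu_dim tc] a_def by (subst mat_of_cols_single[OF nu_dim]) auto
    also have "Dk *\<^sub>v (a \<cdot>\<^sub>v \<nu>) = a \<cdot>\<^sub>v (Dk *\<^sub>v \<nu>)" using mult_mat_vec[OF Dkc nu_dim] .
    also have "Q *\<^sub>v (a \<cdot>\<^sub>v (Dk *\<^sub>v \<nu>)) = a \<cdot>\<^sub>v w" using mult_mat_vec[OF Q_dim Dnu] wD by simp
    also have "S *\<^sub>v (a \<cdot>\<^sub>v w) = a \<cdot>\<^sub>v s" using mult_mat_vec[OF Sc wc] s_def by simp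
    also have "a = y \<bullet> w"
    proof -
      have "a = (transpose_mat Dk *\<^sub>v \<nu>) \<bullet> (transpose_mat Q *\<^sub>v y)"
        unfolding a_def t_def using transpose_vec_mult_scalar[OF Dkc Qty nu_dim] by simp
      also have "\<dots> = (transpose_mat Q *\<^sub>v y) \<bullet> (Dk *\<^sub>v \<nu>)" unfolding DkT using comm_scalar_prod[OF Dnu Qty] .
      also have "\<dots> = y \<bullet> w" using transpose_vec_mult_scalar[OF Q_dim Dnu y] wD by simp
      finally show ?thesis .
    qed
    finally show ?thesis .
  qed
  define E where "E = 1\<^sub>m n - (1 / c) \<cdot>\<^sub>m B"
  have Ec: "E \<in> carrier_mat n n" unfolding E_def using Bc by (intro minus_carrier_mat) simp
  have smv: "((1 / c) \<cdot>\<^sub>m B) *\<^sub>v y = (1 / c) \<cdot>\<^sub>v (B *\<^sub>v y)" if y: "y \<in> carrier_vec n" for y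
    using Bc y by (intro eq_vecI) (auto simp: scalar_prod_def sum_distrib_left ac_simps)
  have Ev: "E *\<^sub>v y = y - (1 / c) \<cdot>\<^sub>v (B *\<^sub>v y)" if y: "y \<in> carrier_vec n" for y
    unfolding E_def using minus_mult_distrib_mat_vec[of "1\<^sub>m n" n n "(1 / c) \<cdot>\<^sub>m B" y] Bc y smv[OF y] by simp
  have goal: "A - A * P' = A * E * S"
  proof (rule mat_eq_vec[of _ n n])
    fix x :: "real vec" assume x: "x \<in> carrier_vec n"
    have Px: "Pp *\<^sub>v x \<in> carrier_vec n" using Ppc x by simp
    have P'xc: "P' *\<^sub>v x \<in> carrier_vec n" using P'c x by simp
    have Sxc: "S *\<^sub>v x \<in> carrier_vec n" using Sc x by simp
    have "(A - A * P') *\<^sub>v x = A *\<^sub>v x - A *\<^sub>v (P' *\<^sub>v x)"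
      using minus_mult_distrib_mat_vec[of A n n "A * P'" x] A_dim P'c x
        assoc_mult_mat_vec[OF A_dim P'c x] by simp
    also have "\<dots> = A *\<^sub>v (x - P' *\<^sub>v x)" using mult_minus_distrib_mat_vec[OF A_dim x P'xc] by simp
    also have "x - P' *\<^sub>v x = E *\<^sub>v (S *\<^sub>v x)"
    proof -
      have "(S *\<^sub>v x) \<bullet> w = s \<bullet> x" unfolding s_def using Ssym[OF x wc] comm_scalar_prod[OF x, of "S *\<^sub>v w"] Sc wc by simp
      then show ?thesis unfolding Ev[OF Sxc] Bv[OF Sxc] unfolding P'x[OF x] Sv[OF x]
        using x Px sc Ppc by (intro eq_vecI) auto
    qed
    also have "A *\<^sub>v (E *\<^sub>v (S *\<^sub>v x)) = (A * E * S) *\<^sub>v x"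
      using assoc_mult_mat_vec[OF A_dim Ec Sxc] assoc_mult_mat_vec[of "A * E" n n S n x] A_dim Ec Sc x by simp
    finally show "(A - A * P') *\<^sub>v x = (A * E * S) *\<^sub>v x" .
  qed (use A_dim P'c Ec Sc in auto)
  show ?thesis
    unfolding Ah vn2 using goal unfolding E_def B_def Dk_def S_def Sm by simp
qed


end
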